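(* Let $\{\xi_k\}$ be the sequence produced by Algorithm DFNDFL (described in the context). Then \[ \lim_{k\to\infty} \xi_k = 0. \]
   Context: Consider the problem $\min f(x)$ s.t. $x\in X\cap\mathcal{Z}$, where $X=\{x\in\mathbb{R}^n: l\le x\le u\}$ is compact (with $l_i<u_i$, and $l_i,u_i\in\mathbb{Z}$ for $i\in I^z$), $\mathcal{Z}=\{x\in\mathbb{R}^n: x_i\in\mathbb{Z},\ i\in I^z\}$, $I^c\cup I^z=\{1,\dots,n\}$, $I^c\cap I^z=\emptyset$, and $f$ is continuous (Lipschitz continuous with respect to $x_i$, $i\in I^c$). Discrete Search$(\tilde\alpha,w,p,\xi;\alpha)$: compute the largest $\bar\alpha$ with $w+\bar\alpha p\in X\cap\mathcal{Z}$, set $\alpha=\min\{\bar\alpha,\tilde\alpha\}$; if $\alpha>0$ and $f(w+\alpha p)\le f(w)-\xi$, repeatedly set $\beta=\min\{\bar\alpha,2\alpha\}$ and, while $f(w+\beta p)\le f(w)-\xi$, set $\alpha=\beta$, then return $\alpha$; otherwise return $\alpha=0$. Algorithm DFNDFL: start from $x_0\in X\cap\mathcal{Z}$, $\xi_0>0$, $\theta\in(0,1)$. At iteration $k$, Phase 1 performs a projected line search along a continuous direction producing $\tilde x_k\in X\cap\mathcal{Z}$ with $f(\tilde x_k)\le f(x_k)$. Phase 2.A sets $y^+=\tilde x_k$ and, while the working set $D$ of feasible primitive integer directions (directions $d\in\mathbb{Z}^n$ with $d_i=0$ for $i\in I^c$, $d_z$ having greatest common divisor of components equal to 1, and $\tilde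 x_k+d\in X\cap\mathcal{Z}$) is nonempty and $y^+=\tilde x_k$, picks $d\in D$, removes it, and runs the Discrete Search from $y=y^+$ along $d$ with tentative step $\tilde\alpha_k^{(d)}$ and decrease parameter $\xi_k$; on success $y^+=y+\alpha d$ (so $f(y^+)\le f(\tilde x_k)-\xi_k$), on failure $\tilde\alpha_{k+1}^{(d)}=\max\{1,\lfloor\tilde\alpha_k^{(d)}/2\rfloor\}$. Phase 2.B: if $y^+=\tilde x_k$ and the Discrete Search fails with tentative step $\tilde\alpha_k^{(d)}=1$ for all $d$ in the current direction set $D_k$, set $\xi_{k+1}=\theta\xi_k$ (and possibly enlarge $D_k$ with new feasible primitive directions); otherwise $\xi_{k+1}=\xi_k$. Phase 3 chooses any $x_{k+1}\in X\cap\mathcal{Z}$ with $f(x_{k+1})\le f(y^+)$. *)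

theory Defs
  imports "HOL-Analysis.Analysis"
begin

definition feas :: "real^'n \<Rightarrow> real^'n \<Rightarrow> 'n set \<Rightarrow> real^'n \<Rightarrow> bool" where
  "feas l u Iz x \<longleftrightarrow> (\<forall>i. l$i \<le> x$i \<and> x$i \<le> u$i) \<and> (\<forall>i\<in>Iz. x$i \<in> \<int>)"

definition rvec :: "int^'n \<Rightarrow> real^'n" where
  "rvec d = (\<chi> i. real_of_int (d$i))"

definition prim_dir :: "'n set \<Rightarrow> int^'n \<Rightarrow> bool" where
  "prim_dir Iz d \<longleftrightarrow> (\<forall>i. i \<notin> Iz \<longrightarrow> d$i = 0) \<and> Gcd ((\<lambda>i. d$i) ` Iz) = 1"

definition max_step :: "real^'n \<Rightarrow> real^'n \<Rightarrow> 'n set \<Rightarrow> real^'n \<Rightarrow> real^'n \<Rightarrow> nat" where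
  "max_step l u Iz w p = Max {a::nat. feas l u Iz (w + real a *\<^sub>R p)}"

text \<open>Expansion loop of the Discrete Search: beta = min abar (2 alpha); continue while
  beta improves on alpha and gives sufficient decrease (fuel argument only ensures totality).\<close>
fun ds_expand :: "nat \<Rightarrow> (nat \<Rightarrow> bool) \<Rightarrow> nat \<Rightarrow> nat \<Rightarrow> nat" where
  "ds_expand 0 ok ab a = a"
| "ds_expand (Suc n) ok ab a =
     (let b = min ab (2*a) in if a < b \<and> ok b then ds_expand n ok ab b else a)"

definition discrete_search ::
  "(real^'n \<Rightarrow> real) \<Rightarrow> real^'n \<Rightarrow> real^'n \<Rightarrow> 'n set \<Rightarrow> nat \<Rightarrow> real^'n \<Rightarrow> real^'n \<Rightarrow> real \<Rightarrow> nat" where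
  "discrete_search f l u Iz tstep w p xi =
     (let ab = max_step l u Iz w p;
          a = min ab tstep;
          ok = (\<lambda>b::nat. f (w + real b *\<^sub>R p) \<le> f w - xi)
      in if 0 < a \<and> ok a then ds_expand ab ok ab a else 0)"

text \<open>One iteration k of DFNDFL.  x = x_k, xt = x~_k, xi = xi_k, D = D_k (direction set),
  tstep k d = tentative step alpha~_k^(d), dord k = the order in which Phase 2.A picks the
  directions of D_k, yp k = y^+ tstep the end of Phase 2.A.\<close>
definition dfndfl_step ::
  "(real^'n \<Rightarrow> real) \<Rightarrow> real^'n \<Rightarrow> real^'n \<Rightarrow> 'n set \<Rightarrow> real \<Rightarrow>
   (nat \<Rightarrow> real^'n) \<Rightarrow> (nat \<Rightarrow> real^'n) \<Rightarrow> (nat \<Rightarrow> real) \<Rightarrow> (nat \<Rightarrow> (int^'n) set) \<Rightarrow>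
   (nat \<Rightarrow> int^'n \<Rightarrow> nat) \<Rightarrow> (nat \<Rightarrow> (int^'n) list) \<Rightarrow> (nat \<Rightarrow> real^'n) \<Rightarrow> nat \<Rightarrow> bool" where
  "dfndfl_step f l u Iz \<theta> x xt xi D tstep dord yp k \<longleftrightarrow>
     \<comment> \<open>Phase 1\<close>
     feas l u Iz (xt k) \<and> f (xt k) \<le> f (x k) \<and>
     \<comment> \<open>Phase 2.A\<close>
     distinct (dord k) \<and> set (dord k) = D k \<and>
     (let L = dord k;
          r = (\<lambda>j. discrete_search f l u Iz (tstep k (L!j)) (xt k) (rvec (L!j)) (xi k))
      in (\<exists>j < length L. (\<forall>i<j. r i = 0) \<and> 0 < r j \<and>
             yp k = xt k + real (r j) *\<^sub>R rvec (L!j) \<and>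
             (\<forall>i<j. tstep (Suc k) (L!i) = max 1 (tstep k (L!i) div 2)) \<and>
             tstep (Suc k) (L!j) = r j \<and>
             (\<forall>i. j < i \<and> i < length L \<longrightarrow> tstep (Suc k) (L!i) = tstep k (L!i)))
       \<or> ((\<forall>i<length L. r i = 0) \<and> yp k = xt k \<and>
             (\<forall>i<length L. tstep (Suc k) (L!i) = max 1 (tstep k (L!i) div 2)))) \<and>
     \<comment> \<open>Phase 2.B\<close>
     (if yp k = xt k \<and> (\<forall>d\<in>D k. tstep k d = 1)
      then xi (Suc k) = \<theta> * xi k \<and>
           (\<exists>N. N \<subseteq> {d. prim_dir Iz d \<and> feas l u Iz (xt k + rvec d)} \<and> D (Suc k) = D k \<union> N)
      else xi (Suc k) = xi k \<and> D (Suc k) = D k) \<and>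
     (\<forall>d. d \<in> D (Suc k) - D k \<longrightarrow> 1 \<le> tstep (Suc k) d) \<and>
     \<comment> \<open>Phase 3\<close>
     feas l u Iz (x (Suc k)) \<and> f (x (Suc k)) \<le> f (yp k)"

definition dfndfl_run ::
  "(real^'n \<Rightarrow> real) \<Rightarrow> real^'n \<Rightarrow> real^'n \<Rightarrow> 'n set \<Rightarrow> real \<Rightarrow>
   (nat \<Rightarrow> real^'n) \<Rightarrow> (nat \<Rightarrow> real^'n) \<Rightarrow> (nat \<Rightarrow> real) \<Rightarrow> (nat \<Rightarrow> (int^'n) set) \<Rightarrow>
   (nat \<Rightarrow> int^'n \<Rightarrow> nat) \<Rightarrow> (nat \<Rightarrow> (int^'n) list) \<Rightarrow> (nat \<Rightarrow> real^'n) \<Rightarrow> bool" where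
  "dfndfl_run f l u Iz \<theta> x xt xi D tstep dord yp \<longleftrightarrow>
     feas l u Iz (x 0) \<and> 0 < xi 0 \<and> finite (D 0) \<and> (\<forall>d\<in>D 0. prim_dir Iz d) \<and>
     (\<forall>d\<in>D 0. 1 \<le> tstep 0 d) \<and>
     (\<forall>k. dfndfl_step f l u Iz \<theta> x xt xi D tstep dord yp k)"

end

theory Submission
  imports Defs
begin

lemma ds_expand_ok: "ok a \<Longrightarrow> ok (ds_expand n ok ab a)"
  by (induction n arbitrary: a) (auto simp: Let_def)

lemma ds_pos:
  assumes "0 < discrete_search f l u Iz t w p xi"
  shows "f (w + real (discrete_search f l u Iz t w p xi) *\<^sub>R p) \<le> f w - xi"
proof -
  let ?ok = "\<lambda>b::nat. f (w + real b *\<^sub>R p) \<le> f w - xi"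
  let ?ab = "max_step l u Iz w p"
  let ?a = "min ?ab t"
  have e: "discrete_search f l u Iz t w p xi = (if 0 < ?a \<and> ?ok ?a then ds_expand ?ab ?ok ?ab ?a else 0)"
    unfolding discrete_search_def Let_def by simp
  show ?thesis
  proof (cases "0 < ?a \<and> ?ok ?a")
    case True
    then show ?thesis using e ds_expand_ok[of ?ok ?a ?ab ?ab] by simp
  next
    case False
    have "discrete_search f l u Iz t w p xi = 0" by (subst e) (simp only: if_not_P[OF False])
    then show ?thesis using assms by simp
  qed
qed

lemma step_facts:
  assumes st: "dfndfl_step f l u Iz \<theta> x xt xi D tstep dord yp k"
  shows "f (xt k) \<le> f (x k)" "f (x (Suc k)) \<le> f (yp k)" "feas l u Iz (x (Suc k))"
    "finite (D k)"
    "(f (yp k) \<le> f (xt k) - xi k) \<or>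
     (yp k = xt k \<and> (\<forall>d\<in>D k. tstep (Suc k) d = max 1 (tstep k d div 2)))"
    "if yp k = xt k \<and> (\<forall>d\<in>D k. tstep k d = 1)
      then xi (Suc k) = \<theta> * xi k
      else xi (Suc k) = xi k \<and> D (Suc k) = D k"
proof -
  show "f (xt k) \<le> f (x k)" "f (x (Suc k)) \<le> f (yp k)" "feas l u Iz (x (Suc k))"
    using st unfolding dfndfl_step_def by auto
  show "finite (D k)" using st unfolding dfndfl_step_def by (metis List.finite_set)
  show "if yp k = xt k \<and> (\<forall>d\<in>D k. tstep k d = 1)
      then xi (Suc k) = \<theta> * xi k
      else xi (Suc k) = xi k \<and> D (Suc k) = D k"
    using st unfolding dfndfl_step_def by (auto split: if_splits)
  define L where "L = dord k"
  define r where "r = (\<lambda>j. discrete_search f l u Iz (tstep k (L!j)) (xt k) (rvec (L!j)) (xi k))"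
  have setL: "set L = D k" using st unfolding dfndfl_step_def L_def by auto
  have disj: "(\<exists>j < length L. (\<forall>i<j. r i = 0) \<and> 0 < r j \<and>
             yp k = xt k + real (r j) *\<^sub>R rvec (L!j))
       \<or> ((\<forall>i<length L. r i = 0) \<and> yp k = xt k \<and>
             (\<forall>i<length L. tstep (Suc k) (L!i) = max 1 (tstep k (L!i) div 2)))"
    using st unfolding dfndfl_step_def Let_def L_def r_def by blast
  show "(f (yp k) \<le> f (xt k) - xi k) \<or>
     (yp k = xt k \<and> (\<forall>d\<in>D k. tstep (Suc k) d = max 1 (tstep k d div 2)))"
    using disj
  proof
    assume "\<exists>j < length L. (\<forall>i<j. r i = 0) \<and> 0 < r j \<and>
             yp k = xt k + real (r j) *\<^sub>R rvec (L!j)"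
    then obtain j where "0 < r j" "yp k = xt k + real (r j) *\<^sub>R rvec (L!j)" by blast
    then have "f (yp k) \<le> f (xt k) - xi k" using ds_pos[of f l u Iz "tstep k (L!j)" "xt k" "rvec (L!j)" "xi k"]
      unfolding r_def by simp
    then show ?thesis by blast
  next
    assume h: "(\<forall>i<length L. r i = 0) \<and> yp k = xt k \<and>
             (\<forall>i<length L. tstep (Suc k) (L!i) = max 1 (tstep k (L!i) div 2))"
    have "\<forall>d\<in>D k. tstep (Suc k) d = max 1 (tstep k d div 2)"
    proof
      fix d assume "d \<in> D k"
      then obtain i where "i < length L" "L!i = d" using setL by (metis in_set_conv_nth)
      then show "tstep (Suc k) d = max 1 (tstep k d div 2)" using h by blast
    qed
    then show ?thesis using h by blast
  qed
qed

theorem mainTheorem8: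
  fixes f :: "real^'n \<Rightarrow> real" and l u :: "real^'n" and Iz :: "'n set" and \<theta> :: real
    and x xt yp :: "nat \<Rightarrow> real^'n" and xi :: "nat \<Rightarrow> real"
    and D :: "nat \<Rightarrow> (int^'n) set" and tstep :: "nat \<Rightarrow> int^'n \<Rightarrow> nat"
    and dord :: "nat \<Rightarrow> (int^'n) list"
  assumes box: "\<forall>i. l$i < u$i"
    and intbounds: "\<forall>i\<in>Iz. l$i \<in> \<int> \<and> u$i \<in> \<int>"
    and cont: "continuous_on {x. \<forall>i. l$i \<le> x$i \<and> x$i \<le> u$i} f"
    and lip: "\<exists>L. \<forall>y z. (\<forall>i. l$i \<le> y$i \<and> y$i \<le> u$i) \<and> (\<forall>i. l$i \<le> z$i \<and> z$i \<le> u$i)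
                 \<and> (\<forall>i\<in>Iz. y$i = z$i) \<longrightarrow> \<bar>f y - f z\<bar> \<le> L * norm (y - z)"
    and theta: "0 < \<theta>" "\<theta> < 1"
    and run: "dfndfl_run f l u Iz \<theta> x xt xi D tstep dord yp"
  shows "xi \<longlonglongrightarrow> 0"
proof -
  have st: "\<And>k. dfndfl_step f l u Iz \<theta> x xt xi D tstep dord yp k" using run unfolding dfndfl_run_def by blast
  note sf = step_facts[OF st]
  have xi0: "0 < xi 0" using run unfolding dfndfl_run_def by blast
  have xipos: "\<And>k. 0 < xi k"
  proof -
    fix k show "0 < xi k"
    proof (induction k)
      case 0 then show ?case using xi0 .
    next
      case (Suc k) then show ?case using sf(6)[of k] theta by (auto split: if_splits)
    qed
  qed
  have xidecS: "\<And>k. xi (Suc k) \<le> xi k"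
  proof -
    fix k
    have "\<theta> * xi k \<le> xi k" using xipos[of k] theta by (simp add: mult_le_cancel_right1)
    then show "xi (Suc k) \<le> xi k" using sf(6)[of k] by (auto split: if_splits)
  qed
  have xidec: "decseq xi" using xidecS by (simp add: decseq_Suc_iff)
  have fdecS: "\<And>k. f (x (Suc k)) \<le> f (x k)"
  proof -
    fix k
    have "f (yp k) \<le> f (xt k)" using sf(5)[of k] xipos[of k] by auto
    then show "f (x (Suc k)) \<le> f (x k)" using sf(1,2)[of k] by linarith
  qed
  have fdec: "decseq (\<lambda>k. f (x k))" using fdecS by (simp add: decseq_Suc_iff)
  define S where "S = {x. \<forall>i. l$i \<le> x$i \<and> x$i \<le> u$i}"
  have Scb: "S = cbox l u" unfolding S_def by (simp add: interval_cart)
  have feasx: "\<And>k. x k \<in> S"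
  proof -
    fix k show "x k \<in> S"
    proof (cases k)
      case 0 then show ?thesis using run unfolding dfndfl_run_def feas_def S_def by auto
    next
      case (Suc j) then show ?thesis using sf(3)[of j] unfolding feas_def S_def by auto
    qed
  qed
  have "compact (f ` S)" using cont Scb S_def compact_continuous_image compact_cbox by metis
  then have "bounded (f ` S)" by (rule compact_imp_bounded)
  then obtain B where B: "\<And>y. y \<in> f ` S \<Longrightarrow> \<bar>y\<bar> \<le> B" using bounded_real by metis
  have lowb: "\<And>k. - B \<le> f (x k)"
  proof -
    fix k have "\<bar>f (x k)\<bar> \<le> B" using B feasx[of k] by blast
    then show "- B \<le> f (x k)" by linarith
  qed
  have key: "\<And>K. \<exists>j\<ge>K. xi (Suc j) = \<theta> * xi j"
  proof (rule ccontr)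
    fix K assume "\<not> (\<exists>j\<ge>K. xi (Suc j) = \<theta> * xi j)"
    then have nored: "\<And>j. j \<ge> K \<Longrightarrow> xi (Suc j) \<noteq> \<theta> * xi j" by blast
    have nc: "\<And>j. j \<ge> K \<Longrightarrow> \<not> (yp j = xt j \<and> (\<forall>d\<in>D j. tstep j d = 1)) \<and> xi (Suc j) = xi j \<and> D (Suc j) = D j"
    proof -
      fix j assume "j \<ge> K"
      then show "\<not> (yp j = xt j \<and> (\<forall>d\<in>D j. tstep j d = 1)) \<and> xi (Suc j) = xi j \<and> D (Suc j) = D j"
        using sf(6)[of j] nored[of j] by (auto split: if_splits)
    qed
    have const: "\<And>n. xi (K + n) = xi K \<and> D (K + n) = D K"
    proof -
      fix n show "xi (K + n) = xi K \<and> D (K + n) = D K"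
        by (induction n) (use nc in auto)
    qed
    have constj: "\<And>j. j \<ge> K \<Longrightarrow> xi j = xi K \<and> D j = D K"
      using const by (metis le_add_diff_inverse)
    define c where "c = xi K"
    have cpos: "0 < c" using xipos c_def by simp
    have "\<exists>K'\<ge>K. \<forall>j\<ge>K'. \<not> (f (yp j) \<le> f (xt j) - xi j)"
    proof (rule ccontr)
      assume "\<not> (\<exists>K'\<ge>K. \<forall>j\<ge>K'. \<not> (f (yp j) \<le> f (xt j) - xi j))"
      then have inf: "\<And>K'. K' \<ge> K \<Longrightarrow> \<exists>j\<ge>K'. f (yp j) \<le> f (xt j) - xi j" by blast
      have "\<And>n::nat. \<exists>j\<ge>K. f (x j) \<le> f (x K) - real n * c"
      proof -
        fix n :: nat show "\<exists>j\<ge>K. f (x j) \<le> f (x K) - real n * c"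
        proof (induction n)
          case 0 then show ?case by auto
        next
          case (Suc n)
          then obtain j where j: "j \<ge> K" "f (x j) \<le> f (x K) - real n * c" by blast
          obtain j' where j': "j' \<ge> j" "f (yp j') \<le> f (xt j') - xi j'" using inf[of j] j by blast
          have "xi j' = c" using constj[of j'] j j' c_def by simp
          moreover have "f (x j') \<le> f (x j)" using fdec j' by (simp add: decseq_def)
          ultimately have "f (x (Suc j')) \<le> f (x K) - real (Suc n) * c"
            using sf(1,2)[of j'] j j' by (simp add: algebra_simps)
          then show ?case using j j' by (intro exI[of _ "Suc j'"]) auto
        qed
      qed
      moreover obtain n :: nat where "f (x K) + B < real n * c"
        using reals_Archimedean3[OF cpos] by blast
      ultimately obtain j where "f (x j) \<le> f (x K) - real n * c" by blast
      then show False using lowb[of j] \<open>f (x K) + B < real n * c\<close> by linarith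
    qed
    then obtain K' where K': "K' \<ge> K" "\<And>j. j \<ge> K' \<Longrightarrow> \<not> (f (yp j) \<le> f (xt j) - xi j)" by blast
    have fail: "\<And>j. j \<ge> K' \<Longrightarrow> yp j = xt j \<and> (\<forall>d\<in>D K. tstep (Suc j) d = max 1 (tstep j d div 2))"
      using sf(5) K' constj by (metis order_trans)
    have finD: "finite (D K)" using sf(4) by blast
    define T where "T = (\<lambda>j. \<Sum>d\<in>D K. tstep j d)"
    have Tdec: "\<And>j. j \<ge> Suc K' \<Longrightarrow> T (Suc j) < T j"
    proof -
      fix j assume j: "j \<ge> Suc K'"
      obtain i where i: "j = Suc i" "i \<ge> K'" using j by (metis Suc_le_D Suc_le_mono)
      have ge1: "\<forall>d\<in>D K. 1 \<le> tstep j d" using fail[OF i(2)] i(1) by auto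
      have fj: "yp j = xt j" "\<forall>d\<in>D K. tstep (Suc j) d = max 1 (tstep j d div 2)" using fail[of j] j by auto
      have "D j = D K" using constj[of j] j K' by simp
      then obtain d where d: "d \<in> D K" "tstep j d \<noteq> 1" using nc[of j] j K' fj by auto
      show "T (Suc j) < T j" unfolding T_def
      proof (rule sum_strict_mono_ex1[OF finD])
        show "\<forall>d\<in>D K. tstep (Suc j) d \<le> tstep j d" using ge1 fj(2) by auto
        show "\<exists>a\<in>D K. tstep (Suc j) a < tstep j a"
          using d ge1 fj(2) by (intro bexI[OF _ d(1)]) auto
      qed
    qed
    have "\<And>n. T (Suc K' + n) + n \<le> T (Suc K')"
    proof -
      fix n show "T (Suc K' + n) + n \<le> T (Suc K')"
      proof (induction n)
        case 0 then show ?case by simp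
      next
        case (Suc n)
        have "T (Suc (Suc K' + n)) < T (Suc K' + n)" using Tdec[of "Suc K' + n"] by simp
        then show ?case using Suc by simp
      qed
    qed
    from this[of "Suc (T (Suc K'))"] show False by simp
  qed
  have red: "\<And>K. \<exists>j. xi j \<le> \<theta> * xi K"
  proof -
    fix K
    obtain j where j: "j \<ge> K" "xi (Suc j) = \<theta> * xi j" using key by blast
    have "xi j \<le> xi K" using xidec j(1) by (simp add: decseq_def)
    then have "xi (Suc j) \<le> \<theta> * xi K" using j(2) theta by simp
    then show "\<exists>j. xi j \<le> \<theta> * xi K" by blast
  qed
  have pw: "\<And>n. \<exists>j. xi j \<le> \<theta> ^ n * xi 0"
  proof -
    fix n show "\<exists>j. xi j \<le> \<theta> ^ n * xi 0"
    proof (induction n)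
      case 0 then show ?case by auto
    next
      case (Suc n)
      then obtain j where j: "xi j \<le> \<theta> ^ n * xi 0" by blast
      obtain j' where "xi j' \<le> \<theta> * xi j" using red by blast
      moreover have "\<theta> * xi j \<le> \<theta> * (\<theta> ^ n * xi 0)" using j theta by simp
      ultimately show ?case by (intro exI[of _ j']) simp
    qed
  qed
  have lim: "(\<lambda>n. \<theta> ^ n * xi 0) \<longlonglongrightarrow> 0"
    using LIMSEQ_power_zero[of \<theta>] theta by (intro tendsto_mult_left_zero) simp
  show ?thesis
  proof (rule LIMSEQ_I)
    fix r :: real assume r: "0 < r"
    from lim r obtain n where "norm (\<theta> ^ n * xi 0 - 0) < r" using LIMSEQ_D by blast
    then have "\<theta> ^ n * xi 0 < r" by simp
    with pw obtain j where j: "xi j < r" by (meson le_less_trans)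
    have "\<forall>k\<ge>j. norm (xi k - 0) < r"
    proof (intro allI impI)
      fix k assume "j \<le> k"
      then have "xi k \<le> xi j" using xidec by (simp add: decseq_def)
      then show "norm (xi k - 0) < r" using xipos[of k] j by simp
    qed
    then show "\<exists>no. \<forall>k\<ge>no. norm (xi k - 0) < r" by blast
  qed
qed

end
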